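(* Let $|\cdot|:\mathbb{Q}\to R$ be a non-archimedean multiplicative generalized seminorm on $\mathbb{Q}$ with trivial kernel. Then $|\cdot|$ is equivalent either to the $p$-adic valuation $|\cdot|_p:\mathbb{Q}\to R_{p^{\mathbb{Z}}}$ for some prime number $p$, or to the trivial valuation $|\cdot|_0:\mathbb{Q}\to\{0,1\}$.
   Context: A halo is a commutative unital semiring with a partial order compatible with $+$ and $\cdot$; an aura is a halo whose semiring is a semifield; positive means $0<1$. A generalized seminorm on a ring $A$ is a map $|\cdot|:A\to R$ into a positive totally ordered aura with $|0|=0,|1|=1$, $|a+b|\le|a|+|b|$, $|ab|\le|a||b|$; multiplicative if $|ab|=|a||b|$; non-archimedean if $|a+b|\le\max(|a|,|b|)$. Two seminorms $|\cdot|_1,|\cdot|_2$ on $A$ are equivalent if for all $a,b\in A$: $|a|_1\le|b|_1\iff|a|_2\le|b|_2$. For a totally ordered multiplicative group $\Gamma$, $R_\Gamma=\{0\}\cup\Gamma$ with $0$ smallest and absorbing and addition $\max$. $R_{p^{\mathbb{Z}}}$ uses $\Gamma=p^{\mathbb{Z}}\subset\mathbb{Q}_{>0}$ with its usual order, $|x|_p=p^{-\mathrm{ord}_p(x)}$ for $x\neq0$; $\{0,1\}=R_{\{1\}}$ and $|x|_0=1$ for $x\neq0$, $|0|_0=0$. *)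

theory Defs
  imports Complex_Main "HOL-Computational_Algebra.Primes"
begin

class pos_tot_aura = comm_semiring_1 + linorder +
  assumes aura_add_mono: "a \<le> b \<Longrightarrow> a + c \<le> b + c"
    and aura_mult_mono: "a \<le> b \<Longrightarrow> a * c \<le> b * c"
    and aura_inverse_ex: "a \<noteq> 0 \<Longrightarrow> \<exists>b. a * b = 1"
    and aura_zero_less_one: "0 < 1"

definition gen_seminorm :: "(rat \<Rightarrow> 'r::pos_tot_aura) \<Rightarrow> bool" where
  "gen_seminorm N \<longleftrightarrow> N 0 = 0 \<and> N 1 = 1
     \<and> (\<forall>a b. N (a + b) \<le> N a + N b) \<and> (\<forall>a b. N (a * b) \<le> N a * N b)"

definition multiplicative :: "(rat \<Rightarrow> 'r::pos_tot_aura) \<Rightarrow> bool" where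
  "multiplicative N \<longleftrightarrow> (\<forall>a b. N (a * b) = N a * N b)"

definition non_archimedean :: "(rat \<Rightarrow> 'r::pos_tot_aura) \<Rightarrow> bool" where
  "non_archimedean N \<longleftrightarrow> (\<forall>a b. N (a + b) \<le> max (N a) (N b))"

definition trivial_kernel :: "(rat \<Rightarrow> 'r::pos_tot_aura) \<Rightarrow> bool" where
  "trivial_kernel N \<longleftrightarrow> (\<forall>a. N a = 0 \<longrightarrow> a = 0)"

definition seminorm_equiv :: "(rat \<Rightarrow> 'r::linorder) \<Rightarrow> (rat \<Rightarrow> 's::linorder) \<Rightarrow> bool" where
  "seminorm_equiv N1 N2 \<longleftrightarrow> (\<forall>a b. N1 a \<le> N1 b \<longleftrightarrow> N2 a \<le> N2 b)"

text \<open>p-adic order of a rational number (for x \<noteq> 0).\<close>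
definition ord_p :: "nat \<Rightarrow> rat \<Rightarrow> int" where
  "ord_p p x = (case quotient_of x of (a, b) \<Rightarrow>
      int (multiplicity (int p) a) - int (multiplicity (int p) b))"

text \<open>p-adic absolute value |x|_p = p^(-ord_p x), with values in
  R_{p^Z} = {0} \<union> p^Z \<subseteq> Q_{\<ge>0} (order inherited from Q).\<close>
definition padic_abs :: "nat \<Rightarrow> rat \<Rightarrow> rat" where
  "padic_abs p x = (if x = 0 then 0 else (of_nat p :: rat) powi (- ord_p p x))"

definition trivial_abs :: "rat \<Rightarrow> rat" where
  "trivial_abs x = (if x = 0 then 0 else 1)"

end

theory Submission
  imports Defs
begin

lemma aura_nonneg: "0 \<le> (a::'a::pos_tot_aura)"
  using aura_mult_mono[of 0 1 a] less_imp_le[OF aura_zero_less_one] by simp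

lemma aura_mult_le: "a \<le> 1 \<Longrightarrow> a * c \<le> (c::'a::pos_tot_aura)"
  using aura_mult_mono[of a 1 c] by simp

lemma aura_strict:
  fixes a b c :: "'a::pos_tot_aura"
  assumes "c \<noteq> 0" "a < b" shows "a * c < b * c"
proof -
  have le: "a * c \<le> b * c" using aura_mult_mono[OF less_imp_le[OF assms(2)]] .
  obtain d where d: "c * d = 1" using aura_inverse_ex assms(1) by blast
  have "a * c \<noteq> b * c"
  proof
    assume "a * c = b * c"
    then have "a * c * d = b * c * d" by simp
    then have "a = b" using d by (simp add: mult.assoc)
    then show False using assms by simp
  qed
  then show ?thesis using le by simp
qed

lemma ord_p_frac:
  assumes p: "prime p" and a: "a \<noteq> 0" and b: "b \<noteq> 0"
  shows "ord_p p (of_int a / of_int b) = int (multiplicity (int p) a) - int (multiplicity (int p) b)"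
proof -
  obtain a' b' where q: "quotient_of (of_int a / of_int b) = (a', b')" by (cases "quotient_of (of_int a / of_int b)")
  have b'pos: "0 < b'" using quotient_of_denom_pos[OF q] .
  have eq: "(of_int a / of_int b :: rat) = of_int a' / of_int b'" using quotient_of_div[OF q] .
  then have "(of_int (a' * b) :: rat) = of_int (a * b')" using b b'pos
    by (simp add: field_simps)
  then have e: "a' * b = a * b'" by (simp only: of_int_eq_iff)
  have a'0: "a' \<noteq> 0" using e a b b'pos by auto
  have pe: "prime_elem (int p)" using p by simp
  have "multiplicity (int p) (a' * b) = multiplicity (int p) (a * b')" using e by simp
  then have "multiplicity (int p) a' + multiplicity (int p) b = multiplicity (int p) a + multiplicity (int p) b'"
    using prime_elem_multiplicity_mult_distrib[OF pe] a'0 b a b'pos by simp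
  then show ?thesis unfolding ord_p_def q by simp
qed

lemma ord_p_div:
  assumes p: "prime p" and x: "x \<noteq> 0" and y: "y \<noteq> 0"
  shows "ord_p p (x / y) = ord_p p x - ord_p p y"
proof -
  obtain a b where qa: "quotient_of x = (a, b)" by (cases "quotient_of x")
  obtain c d where qc: "quotient_of y = (c, d)" by (cases "quotient_of y")
  have xd: "x = of_int a / of_int b" using quotient_of_div[OF qa] .
  have yd: "y = of_int c / of_int d" using quotient_of_div[OF qc] .
  have b: "b > 0" using quotient_of_denom_pos[OF qa] .
  have d: "d > 0" using quotient_of_denom_pos[OF qc] .
  have a: "a \<noteq> 0" using x xd by auto
  have c: "c \<noteq> 0" using y yd by auto
  have "(of_int a / of_int b) / (of_int c / of_int d) = (of_int (a * d) / of_int (b * c) :: rat)"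
    using b d c by (simp add: field_simps)
  then have "x / y = of_int (a * d) / of_int (b * c)" using xd yd by simp
  then have "ord_p p (x / y) = int (multiplicity (int p) (a*d)) - int (multiplicity (int p) (b*c))"
    using ord_p_frac[OF p, of "a*d" "b*c"] a b c d by (simp del: of_int_mult)
  moreover have "ord_p p x = int (multiplicity (int p) a) - int (multiplicity (int p) b)"
    unfolding ord_p_def qa by simp
  moreover have "ord_p p y = int (multiplicity (int p) c) - int (multiplicity (int p) d)"
    unfolding ord_p_def qc by simp
  moreover have "prime_elem (int p)" using p by simp
  moreover have "multiplicity (int p) (a*d) = multiplicity (int p) a + multiplicity (int p) d"
    "multiplicity (int p) (b*c) = multiplicity (int p) b + multiplicity (int p) c"
    using prime_elem_multiplicity_mult_distrib[OF \<open>prime_elem (int p)\<close>] a b c d by auto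
  ultimately show ?thesis by simp
qed

lemma padic_le_iff:
  assumes p: "prime p" and x: "x \<noteq> 0" and y: "y \<noteq> 0"
  shows "padic_abs p x \<le> padic_abs p y \<longleftrightarrow> ord_p p y \<le> ord_p p x"
proof -
  have p1: "(1::rat) < of_nat p" using p prime_gt_1_nat by simp
  have "(of_nat p :: rat) powi (- ord_p p x) \<le> of_nat p powi (- ord_p p y) \<longleftrightarrow> - ord_p p x \<le> - ord_p p y"
  proof
    assume h: "(of_nat p :: rat) powi (- ord_p p x) \<le> of_nat p powi (- ord_p p y)"
    show "- ord_p p x \<le> - ord_p p y"
    proof (rule ccontr)
      assume "\<not> - ord_p p x \<le> - ord_p p y"
      then have "- ord_p p y < - ord_p p x" by simp
      then have "(of_nat p :: rat) powi (- ord_p p y) < of_nat p powi (- ord_p p x)"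
        using p1 by (simp add: power_int_strict_increasing)
      then show False using h by simp
    qed
  next
    assume "- ord_p p x \<le> - ord_p p y"
    then show "(of_nat p :: rat) powi (- ord_p p x) \<le> of_nat p powi (- ord_p p y)"
      using p1 by (intro power_int_increasing) auto
  qed
  then show ?thesis unfolding padic_abs_def using x y by simp
qed

lemma padic_pos: "prime p \<Longrightarrow> x \<noteq> 0 \<Longrightarrow> 0 < padic_abs p x"
  unfolding padic_abs_def using prime_gt_0_nat[of p] by simp

locale nsn =
  fixes N :: "rat \<Rightarrow> 'r::pos_tot_aura"
  assumes sn: "gen_seminorm N" and mu: "multiplicative N"
    and na: "non_archimedean N" and tk: "trivial_kernel N"
begin

lemma N0: "N 0 = 0" using sn unfolding gen_seminorm_def by simp
lemma N1: "N 1 = 1" using sn unfolding gen_seminorm_def by simp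
lemma Nmult: "N (a * b) = N a * N b" using mu unfolding multiplicative_def by simp
lemma Nadd: "N (a + b) \<le> max (N a) (N b)" using na unfolding non_archimedean_def by simp
lemma Nnz: "x \<noteq> 0 \<Longrightarrow> N x \<noteq> 0" using tk unfolding trivial_kernel_def by blast

lemma Nm1: "N (-1) = 1"
proof -
  define u where "u = N (-1)"
  have uu: "u * u = 1" unfolding u_def using Nmult[of "-1" "-1"] N1 by simp
  have u0: "u \<noteq> 0" unfolding u_def using Nnz by simp
  show ?thesis
  proof (rule ccontr)
    assume "N (-1) \<noteq> 1"
    then have "u < 1 \<or> 1 < u" unfolding u_def by auto
    then show False
    proof
      assume "u < 1"
      then have "u * u < 1 * u" using aura_strict[OF u0] by blast
      then show False using uu \<open>u < 1\<close> by simp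
    next
      assume "1 < u"
      then have "1 * u < u * u" using aura_strict[OF u0] by blast
      then show False using uu \<open>1 < u\<close> by simp
    qed
  qed
qed

lemma Nneg: "N (- x) = N x"
  using Nmult[of "-1" x] Nm1 by simp

lemma Nnat_le: "N (of_nat n) \<le> 1"
proof (induction n)
  case 0 then show ?case using N0 less_imp_le[OF aura_zero_less_one] by simp
next
  case (Suc n)
  have "N (of_nat (Suc n)) = N (of_nat n + 1)" by (simp add: add.commute)
  also have "\<dots> \<le> max (N (of_nat n)) (N 1)" by (rule Nadd)
  also have "\<dots> \<le> 1" using Suc N1 by simp
  finally show ?case .
qed

lemma Nint_le: "N (of_int n) \<le> 1"
proof (cases "n \<ge> 0")
  case True
  then have "(of_int n :: rat) = of_nat (nat n)" by simp
  then show ?thesis using Nnat_le[of "nat n"] by (simp only:)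
next
  case False
  then have e: "(of_int n :: rat) = - of_nat (nat (- n))" by simp
  have "N (of_int n) = N (of_nat (nat (- n)))" unfolding e by (rule Nneg)
  then show ?thesis using Nnat_le[of "nat (- n)"] by (simp only:)
qed

lemma Ndiv:
  assumes y: "y \<noteq> 0" shows "N x \<le> N y \<longleftrightarrow> N (x / y) \<le> 1"
proof -
  have e: "N x = N (x / y) * N y" using Nmult[of "x/y" y] y by simp
  show ?thesis
  proof
    assume h: "N x \<le> N y"
    show "N (x / y) \<le> 1"
    proof (rule ccontr)
      assume "\<not> N (x / y) \<le> 1"
      then have "1 < N (x / y)" by simp
      then have "1 * N y < N (x / y) * N y" using aura_strict Nnz[OF y] by blast
      then show False using h e by simp
    qed
  next
    assume "N (x / y) \<le> 1"
    then show "N x \<le> N y" using e aura_mult_le by simp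
  qed
qed

lemma Nprime:
  assumes "\<exists>n::int. n \<noteq> 0 \<and> N (of_int n) < 1"
  shows "\<exists>p. prime p \<and> (\<forall>n::int. N (of_int n) < 1 \<longleftrightarrow> int p dvd n)"
proof -
  define S where "S = {m::nat. 0 < m \<and> N (of_nat m) < 1}"
  obtain n :: int where n: "n \<noteq> 0" "N (of_int n) < 1" using assms by blast
  have "N (of_nat (nat \<bar>n\<bar>)) = N (of_int n)"
  proof (cases "n \<ge> 0")
    case True then show ?thesis by simp
  next
    case False
    then have e: "(of_nat (nat \<bar>n\<bar>) :: rat) = - of_int n" by simp
    show ?thesis unfolding e by (rule Nneg)
  qed
  then have "nat \<bar>n\<bar> \<in> S" unfolding S_def using n by simp
  define p where "p = (LEAST m. m \<in> S)"
  have pS: "p \<in> S" unfolding p_def by (rule LeastI) (rule \<open>nat \<bar>n\<bar> \<in> S\<close>)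
  have pmin: "\<And>m. m \<in> S \<Longrightarrow> p \<le> m" unfolding p_def by (rule Least_le)
  have p0: "0 < p" and Np: "N (of_nat p) < 1" using pS unfolding S_def by auto
  have Nintnat: "\<And>m. N (of_nat m) \<le> 1" by (rule Nnat_le)
  have dvd1: "int p dvd k" if k: "N (of_int k) < 1" for k :: int
  proof -
    define r where "r = k mod int p"
    define q where "q = k div int p"
    have kq: "k = r + (- q) * (- int p)" unfolding r_def q_def by simp
    have eqr: "(of_int r :: rat) = of_int k + (- of_int q) * of_nat p"
      using kq by (simp add: algebra_simps)
    have "N (of_int r) \<le> max (N (of_int k)) (N ((- of_int q) * of_nat p))"
      by (subst eqr) (rule Nadd)
    moreover have "N ((- of_int q) * of_nat p) \<le> N (of_nat p)"
    proof -
      have "N ((- of_int q) * of_nat p) = N (of_int q) * N (of_nat p)"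
        by (simp only: Nmult Nneg)
      also have "\<dots> \<le> N (of_nat p)" by (rule aura_mult_le[OF Nint_le])
      finally show ?thesis .
    qed
    ultimately have Nr: "N (of_int r) < 1" using k Np
      by (metis max_less_iff_conj le_less_trans)
    have r0: "0 \<le> r" "r < int p" unfolding r_def using p0 by auto
    show ?thesis
    proof (rule ccontr)
      assume "\<not> int p dvd k"
      then have "r \<noteq> 0" unfolding r_def by (simp add: dvd_eq_mod_eq_0)
      then have "nat r \<in> S" unfolding S_def using r0 Nr by simp
      then have "p \<le> nat r" by (rule pmin)
      then show False using r0 by simp
    qed
  qed
  have dvd2: "N (of_int k) < 1" if k: "int p dvd k" for k :: int
  proof -
    obtain j where j: "k = int p * j" using k by blast
    have "(of_int k :: rat) = of_int j * of_nat p" using j by simp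
    then have "N (of_int k) = N (of_int j) * N (of_nat p)" by (simp only: Nmult)
    also have "\<dots> \<le> N (of_nat p)" by (rule aura_mult_le[OF Nint_le])
    finally show ?thesis using Np by simp
  qed
  have "prime p"
    unfolding prime_nat_iff
  proof (intro conjI allI impI)
    have "p \<noteq> 1" using Np N1 by auto
    then show "1 < p" using p0 by simp
  next
    fix m assume md: "m dvd p"
    then obtain k where pk: "p = m * k" by blast
    have m0: "0 < m" and k0: "0 < k" using pk p0 by auto
    have "(of_nat p :: rat) = of_nat m * of_nat k" using pk by simp
    then have e: "N (of_nat p) = N (of_nat m) * N (of_nat k)" by (simp only: Nmult)
    show "m = 1 \<or> m = p"
    proof (cases "N (of_nat m) < 1")
      case True
      then have "m \<in> S" unfolding S_def using m0 by simp
      then have "p \<le> m" by (rule pmin)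
      moreover have "m \<le> p" using md p0 by (simp add: dvd_imp_le)
      ultimately show ?thesis by simp
    next
      case False
      then have "N (of_nat m) = 1" using Nnat_le[of m] by simp
      then have "N (of_nat k) < 1" using e Np by simp
      then have "k \<in> S" unfolding S_def using k0 by simp
      then have "p \<le> k" by (rule pmin)
      then have "m * k \<le> 1 * k" using pk by simp
      then have "m \<le> 1" using k0 by simp
      then show ?thesis using m0 by simp
    qed
  qed
  then show ?thesis using dvd1 dvd2 by blast
qed

lemma Nord:
  assumes p: "prime p" and hp: "\<forall>n::int. N (of_int n) < 1 \<longleftrightarrow> int p dvd n"
    and x: "x \<noteq> 0"
  shows "N x \<le> 1 \<longleftrightarrow> 0 \<le> ord_p p x"
proof -
  obtain a b where q: "quotient_of x = (a, b)" by (cases "quotient_of x")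
  have xd: "x = of_int a / of_int b" using quotient_of_div[OF q] .
  have b: "b > 0" using quotient_of_denom_pos[OF q] .
  have cop: "coprime a b" using quotient_of_coprime[OF q] .
  have a: "a \<noteq> 0" using x xd by auto
  have ord: "ord_p p x = int (multiplicity (int p) a) - int (multiplicity (int p) b)"
    unfolding ord_p_def q by simp
  have "x * of_int b = of_int a" using xd b by simp
  then have e: "N x * N (of_int b) = N (of_int a)" using Nmult by metis
  have pe: "prime_elem (int p)" using p by simp
  have pnu: "\<not> is_unit (int p)" using pe prime_elem_not_unit by blast
  show ?thesis
  proof (cases "int p dvd b")
    case False
    then have "N (of_int b) = 1" using hp Nint_le[of b] by (meson order_less_le)
    then have "N x = N (of_int a)" using e by simp
    moreover have "multiplicity (int p) b = 0" using False not_dvd_imp_multiplicity_0 by blast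
    ultimately show ?thesis using ord Nint_le[of a] by simp
  next
    case True
    have "\<not> int p dvd a" using True cop pnu coprime_common_divisor by blast
    then have Na: "N (of_int a) = 1" using hp Nint_le[of a] by (meson order_less_le)
    have "multiplicity (int p) a = 0" using \<open>\<not> int p dvd a\<close> not_dvd_imp_multiplicity_0 by blast
    moreover have "0 < multiplicity (int p) b" using prime_multiplicity_gt_zero_iff[OF pe] b True by simp
    ultimately have "ord_p p x < 0" using ord by simp
    moreover have "\<not> N x \<le> 1"
    proof
      assume "N x \<le> 1"
      then have "N x * N (of_int b) \<le> N (of_int b)" by (rule aura_mult_le)
      then show False using e Na True hp by (metis not_le)
    qed
    ultimately show ?thesis by simp
  qed
qed

lemma Ntriv:
  assumes hp: "\<forall>n::int. n \<noteq> 0 \<longrightarrow> N (of_int n) = 1" and x: "x \<noteq> 0"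
  shows "N x = 1"
proof -
  obtain a b where q: "quotient_of x = (a, b)" by (cases "quotient_of x")
  have xd: "x = of_int a / of_int b" using quotient_of_div[OF q] .
  have b: "b > 0" using quotient_of_denom_pos[OF q] .
  have a: "a \<noteq> 0" using x xd by auto
  have "x * of_int b = of_int a" using xd b by simp
  then have e: "N x * N (of_int b) = N (of_int a)" using Nmult by metis
  then show ?thesis using hp a b by simp
qed

end

theorem lemma3p9:
  fixes N :: "rat \<Rightarrow> 'r::pos_tot_aura"
  assumes "gen_seminorm N"
    and "multiplicative N"
    and "non_archimedean N"
    and "trivial_kernel N"
  shows "(\<exists>p. prime p \<and> seminorm_equiv N (padic_abs p)) \<or> seminorm_equiv N trivial_abs"
proof -
  interpret nsn N using assms by unfold_locales
  have Npos: "\<And>x. x \<noteq> 0 \<Longrightarrow> \<not> N x \<le> 0" using Nnz aura_nonneg by (metis antisym)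
  show ?thesis
  proof (cases "\<exists>n::int. n \<noteq> 0 \<and> N (of_int n) < 1")
    case True
    then obtain p where p: "prime p" and hp: "\<forall>n::int. N (of_int n) < 1 \<longleftrightarrow> int p dvd n"
      using Nprime by blast
    have "seminorm_equiv N (padic_abs p)"
      unfolding seminorm_equiv_def
    proof (intro allI)
      fix a b
      show "N a \<le> N b \<longleftrightarrow> padic_abs p a \<le> padic_abs p b"
      proof (cases "a = 0")
        case True
        then show ?thesis using N0 aura_nonneg padic_pos[OF p, of b]
          by (cases "b = 0") (auto simp: padic_abs_def)
      next
        case a: False
        show ?thesis
        proof (cases "b = 0")
          case True
          then show ?thesis using a Npos N0 padic_pos[OF p a] by (simp add: padic_abs_def)
        next
          case b: False
          have "N a \<le> N b \<longleftrightarrow> N (a / b) \<le> 1" using Ndiv[OF b] .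
          also have "\<dots> \<longleftrightarrow> 0 \<le> ord_p p (a / b)" using Nord[OF p hp] a b by simp
          also have "\<dots> \<longleftrightarrow> ord_p p b \<le> ord_p p a" using ord_p_div[OF p a b] by simp
          also have "\<dots> \<longleftrightarrow> padic_abs p a \<le> padic_abs p b" using padic_le_iff[OF p a b] by simp
          finally show ?thesis .
        qed
      qed
    qed
    then show ?thesis using p by blast
  next
    case False
    then have hp: "\<forall>n::int. n \<noteq> 0 \<longrightarrow> N (of_int n) = 1"
      using Nint_le by (metis order_less_le)
    have "seminorm_equiv N trivial_abs"
      unfolding seminorm_equiv_def trivial_abs_def
      using Ntriv[OF hp] N0 aura_nonneg Npos by auto
    then show ?thesis by blast
  qed
qed

end
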